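(* Let $(a,b,c)$ be a primitive Eisenstein triple, and let $m,n$ be positive coprime integers with $1\le m/n\le2$ and $3\nmid(m+n)$ such that either $(a,b,c)$ or $(b-a,b,c)$ equals $(m(2n-m),\ n(2m-n),\ m^2-mn+n^2)$. Let $\theta\in[\pi/3,\pi/2]$ satisfy $\cos\theta = |b-2a|/(2c)$, and define $$\Gamma_\theta = \begin{bmatrix}1&-\frac12\\0&\frac{\sqrt3}{2}\end{bmatrix}\begin{bmatrix} m & m-n\\ m-n & m\end{bmatrix}\mathbb{Z}^2 = \frac12\begin{bmatrix} m+n & m-2n\\ (m-n)\sqrt3 & m\sqrt3\end{bmatrix}\mathbb{Z}^2.$$ Then $\Gamma_\theta\in\mathrm{WR}(\Lambda_h)$, $C_h(\theta)$ is the set of all lattices in $\mathrm{WR}(\Lambda_h)$ similar to $\Gamma_\theta$, and $$|\Gamma_\theta| = c,\qquad \det\Gamma_\theta = b\frac{\sqrt3}{2},\qquad |\Lambda_h:\Gamma_\theta| = b.$$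
   Context: $\Lambda_h = \begin{bmatrix} 1 & -1/2 \\ 0 & \sqrt3/2\end{bmatrix}\mathbb{Z}^2$. For a full-rank lattice $\Gamma=A\mathbb{Z}^2\subset\mathbb{R}^2$, $\det\Gamma=|\det A|$, $|\Gamma|=\min\{\|y\|^2:y\in\Gamma\setminus\{0\}\}$, and for $\Gamma\subseteq\Lambda_h$, $|\Lambda_h:\Gamma|=\det\Gamma/\det\Lambda_h$. $\Gamma$ is well-rounded (WR) if it has a basis of vectors of squared norm $|\Gamma|$; such a basis can be chosen with angle in $[\pi/3,\pi/2]$ between its vectors, and this angle $\theta(\Gamma)$ is an invariant. $\mathrm{WR}(\Lambda_h)$ is the set of full-rank WR sublattices of $\Lambda_h$, $C_h(\theta)=\{\Omega\in\mathrm{WR}(\Lambda_h):\theta(\Omega)=\theta\}$. Lattices are similar if one is $\alpha A$ times the other for nonzero real $\alpha$ and $A\in O_2(\mathbb{R})$. An Eisenstein triple is $(a,b,c)\in\mathbb{Z}^3_{\ge0}\setminus\{0\}$ with $a^2-ab+b^2=c^2$; it is primitive if $a\le b$ and $\gcd(a,b,c)=1$. *)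

theory Defs
  imports "HOL-Analysis.Analysis"
begin

definition lat :: "real^2^2 \<Rightarrow> (real^2) set" where
  "lat A = range (\<lambda>z::int^2. A *v (\<chi> i. real_of_int (z $ i)))"

definition is_lattice :: "(real^2) set \<Rightarrow> bool" where
  "is_lattice L \<longleftrightarrow> (\<exists>A. det A \<noteq> 0 \<and> L = lat A)"

definition lattice_det :: "(real^2) set \<Rightarrow> real" where
  "lattice_det L = \<bar>det (SOME A. det A \<noteq> 0 \<and> L = lat A)\<bar>"

definition min_norm :: "(real^2) set \<Rightarrow> real" where
  "min_norm L = Inf {(norm y)^2 | y. y \<in> L \<and> y \<noteq> 0}"

definition lat_index :: "(real^2) set \<Rightarrow> (real^2) set \<Rightarrow> real" where
  "lat_index L G = lattice_det G / lattice_det L"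

definition Lambda_h_mat :: "real^2^2" where
  "Lambda_h_mat = vector [vector [1, -1/2], vector [0, sqrt 3 / 2]]"

definition Lambda_h :: "(real^2) set" where
  "Lambda_h = lat Lambda_h_mat"

definition vec_angle :: "real^2 \<Rightarrow> real^2 \<Rightarrow> real" where
  "vec_angle u v = arccos (inner u v / (norm u * norm v))"

definition min_basis :: "(real^2) set \<Rightarrow> real^2^2 \<Rightarrow> bool" where
  "min_basis L A \<longleftrightarrow> det A \<noteq> 0 \<and> L = lat A \<and>
     (norm (column 1 A))^2 = min_norm L \<and> (norm (column 2 A))^2 = min_norm L"

definition well_rounded :: "(real^2) set \<Rightarrow> bool" where
  "well_rounded L \<longleftrightarrow> is_lattice L \<and> (\<exists>A. min_basis L A)"

definition wr_angle :: "(real^2) set \<Rightarrow> real" where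
  "wr_angle L = (THE t. \<exists>A. min_basis L A \<and> vec_angle (column 1 A) (column 2 A) = t
                     \<and> pi/3 \<le> t \<and> t \<le> pi/2)"

definition WR_h :: "(real^2) set set" where
  "WR_h = {\<Omega>. well_rounded \<Omega> \<and> \<Omega> \<subseteq> Lambda_h}"

definition C_h :: "real \<Rightarrow> (real^2) set set" where
  "C_h \<theta> = {\<Omega> \<in> WR_h. wr_angle \<Omega> = \<theta>}"

definition similar_lat :: "(real^2) set \<Rightarrow> (real^2) set \<Rightarrow> bool" where
  "similar_lat L M \<longleftrightarrow> (\<exists>\<alpha> Q. \<alpha> \<noteq> 0 \<and> orthogonal_matrix Q \<and>
      L = (\<lambda>x. \<alpha> *\<^sub>R (Q *v x)) ` M)"

definition eisenstein_triple :: "int \<Rightarrow> int \<Rightarrow> int \<Rightarrow> bool" where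
  "eisenstein_triple a b c \<longleftrightarrow> a \<ge> 0 \<and> b \<ge> 0 \<and> c \<ge> 0 \<and> (a, b, c) \<noteq> (0, 0, 0)
      \<and> a^2 - a*b + b^2 = c^2"

definition primitive_eisenstein_triple :: "int \<Rightarrow> int \<Rightarrow> int \<Rightarrow> bool" where
  "primitive_eisenstein_triple a b c \<longleftrightarrow> eisenstein_triple a b c \<and> a \<le> b \<and> gcd (gcd a b) c = 1"

definition Gamma_mat :: "int \<Rightarrow> int \<Rightarrow> real^2^2" where
  "Gamma_mat m n = Lambda_h_mat ** vector [vector [real_of_int m, real_of_int (m - n)],
                                          vector [real_of_int (m - n), real_of_int m]]"

end

theory Submission
  imports Defs
begin


lemma lat_mem: "A *v (\<chi> i. real_of_int (z $ i)) \<in> lat A"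
  unfolding lat_def by blast

lemma mv2: "((A::real^2^2) *v x) $ i = A $ i $ 1 * x $ 1 + A $ i $ 2 * x $ 2"
  by (simp add: matrix_vector_mult_def sum_2)

lemma mm2: "((A::real^2^2) ** (B::real^2^2)) $ i $ j = A $ i $ 1 * B $ 1 $ j + A $ i $ 2 * B $ 2 $ j"
  by (simp add: matrix_matrix_mult_def sum_2)

lemma inner2: "(x::real^2) \<bullet> y = x $ 1 * y $ 1 + x $ 2 * y $ 2"
  by (simp add: inner_vec_def sum_2)

lemma nsq2: "(norm (x::real^2))^2 = (x $ 1)^2 + (x $ 2)^2"
  unfolding power2_norm_eq_inner inner2 by (simp add: power2_eq_square)

lemma col_ent: "column j A $ i = A $ i $ j"
  by (simp add: column_def)

lemma vec2_eq: "(x::'a^2) = y \<longleftrightarrow> x $ 1 = y $ 1 \<and> x $ 2 = y $ 2"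
  by (metis (mono_tags, lifting) exhaust_2 vec_eq_iff)

lemma mat2_eq: "(A::'a^2^2) = B \<longleftrightarrow> A$1$1 = B$1$1 \<and> A$1$2 = B$1$2 \<and> A$2$1 = B$2$1 \<and> A$2$2 = B$2$2"
  by (metis vec2_eq)

lemma det_int: assumes "\<forall>i j. (M::real^2^2) $ i $ j \<in> \<int>" shows "det M \<in> \<int>"
  using assms by (simp add: det_2)

lemma lat_intmat: assumes "\<forall>i j. M $ i $ j \<in> \<int>" shows "lat (A ** M) \<subseteq> lat A"
proof
  fix y assume "y \<in> lat (A ** M)"
  then obtain z where y: "y = (A ** M) *v (\<chi> i. real_of_int (z $ i))" unfolding lat_def by blast
  define w :: "int^2" where "w = (\<chi> i. \<lfloor>M$i$1\<rfloor> * z$1 + \<lfloor>M$i$2\<rfloor> * z$2)"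
  have "M *v (\<chi> i. real_of_int (z $ i)) = (\<chi> i. real_of_int (w $ i))"
    using assms unfolding vec2_eq w_def by (simp add: mv2)
  then have "y = A *v (\<chi> i. real_of_int (w $ i))"
    using y by (metis matrix_vector_mul_assoc)
  then show "y \<in> lat A" using lat_mem by simp
qed

lemma lat_det_eq:
  assumes "det A \<noteq> 0" "lat A = lat B"
  shows "\<bar>det A\<bar> = \<bar>det B\<bar>"
proof -
  have key: "\<exists>U. (\<forall>i j. U $ i $ j \<in> \<int>) \<and> Y = X ** U" if "lat X = lat Y" for X Y :: "real^2^2"
  proof -
    have "\<forall>j. \<exists>z::int^2. column j Y = X *v (\<chi> i. real_of_int (z $ i))"
    proof
      fix j :: 2
      have "column j Y = Y *v (\<chi> i. real_of_int (if i = j then 1 else 0))"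
        unfolding vec2_eq using exhaust_2[of j] by (auto simp: mv2 col_ent)
      also have "\<dots> \<in> lat X" using lat_mem[of Y "\<chi> i. if i = j then 1 else (0::int)"] that by simp
      finally show "\<exists>z::int^2. column j Y = X *v (\<chi> i. real_of_int (z $ i))"
        unfolding lat_def by auto
    qed
    then obtain Z :: "2 \<Rightarrow> int^2" where Z: "\<And>j. column j Y = X *v (\<chi> i. real_of_int (Z j $ i))"
      by metis
    define U :: "real^2^2" where "U = (\<chi> i j. real_of_int (Z j $ i))"
    have "\<forall>i j. U $ i $ j \<in> \<int>" by (simp add: U_def)
    moreover have "Y = X ** U"
    proof -
      have "Y $ i $ j = (X ** U) $ i $ j" for i j
      proof -
        have "Y $ i $ j = column j Y $ i" by (simp add: col_ent)
        also have "\<dots> = (X ** U) $ i $ j" by (simp add: Z mv2 mm2 U_def)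
        finally show ?thesis .
      qed
      then show ?thesis by (simp add: vec_eq_iff)
    qed
    ultimately show ?thesis by blast
  qed
  obtain U where U: "\<forall>i j. U $ i $ j \<in> \<int>" "B = A ** U" using key[of A B] assms(2) by auto
  obtain V where V: "\<forall>i j. V $ i $ j \<in> \<int>" "A = B ** V" using key[of B A] assms(2) by auto
  have "det A = det A * (det U * det V)"
    using U(2) V(2) by (metis det_mul mult.assoc)
  then have "det U * det V = 1" using assms(1) by simp
  moreover obtain p q where "det U = of_int p" "det V = of_int q"
    using det_int[OF U(1)] det_int[OF V(1)] by (metis Ints_cases)
  ultimately have "p * q = 1" by (metis of_int_eq_1_iff of_int_mult)
  then have "\<bar>p\<bar> = 1" using zmult_eq_1_iff by auto
  then have "\<bar>det U\<bar> = 1" using \<open>det U = of_int p\<close> by simp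
  then show ?thesis using U(2) by (simp add: det_mul abs_mult)
qed

lemma lattice_det_lat: assumes "det A \<noteq> 0" shows "lattice_det (lat A) = \<bar>det A\<bar>"
proof -
  let ?B = "SOME B. det B \<noteq> 0 \<and> lat A = lat B"
  have "det ?B \<noteq> 0 \<and> lat A = lat ?B" by (rule someI[of _ A]) (use assms in auto)
  then show ?thesis unfolding lattice_det_def using lat_det_eq assms by metis
qed



definition neg2 :: "real^2^2 \<Rightarrow> real^2^2" where
  "neg2 A = (\<chi> i j. if j = 2 then - A$i$j else A$i$j)"

lemma neg2_ent: "neg2 A $ i $ 1 = A $ i $ 1" "neg2 A $ i $ 2 = - A $ i $ 2"
  by (simp_all add: neg2_def)

lemma neg2_cols: "column 1 (neg2 A) = column 1 A" "column 2 (neg2 A) = - column 2 A"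
  by (simp_all add: vec2_eq col_ent neg2_ent)

lemma neg2_det: "det (neg2 A) = - det A"
  by (simp add: det_2 neg2_ent)

lemma neg2_lat: "lat (neg2 A) = lat A"
proof -
  have *: "lat (neg2 B) \<subseteq> lat B" for B
  proof
    fix y assume "y \<in> lat (neg2 B)"
    then obtain z where y: "y = neg2 B *v (\<chi> i. real_of_int (z $ i))" unfolding lat_def by blast
    define w :: "int^2" where "w = (\<chi> i. if i = 2 then - z$i else z$i)"
    have "y = B *v (\<chi> i. real_of_int (w $ i))"
      unfolding y vec2_eq w_def by (simp add: mv2 neg2_ent)
    then show "y \<in> lat B" using lat_mem by simp
  qed
  have "neg2 (neg2 A) = A" by (simp add: mat2_eq neg2_ent)
  then show ?thesis using *[of A] *[of "neg2 A"] by auto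
qed

lemma min_norm_le: assumes "y \<in> L" "y \<noteq> 0" shows "min_norm L \<le> (norm y)^2"
  unfolding min_norm_def
  by (rule cInf_lower) (use assms in \<open>auto intro!: bdd_belowI[of _ 0]\<close>)

lemma lagrange2: "(det (A::real^2^2))^2 + (column 1 A \<bullet> column 2 A)^2 = (norm (column 1 A))^2 * (norm (column 2 A))^2"
  unfolding nsq2 inner2 col_ent det_2 by (simp add: algebra_simps power2_eq_square)

lemma norm_mv: "(norm ((A::real^2^2) *v x))^2 = (x$1)^2 * (norm (column 1 A))^2 + (x$2)^2 * (norm (column 2 A))^2
   + 2 * x$1 * x$2 * (column 1 A \<bullet> column 2 A)"
  unfolding nsq2 inner2 col_ent mv2 by (simp add: algebra_simps power2_eq_square)

lemma det_col_nz: assumes "det (A::real^2^2) \<noteq> 0"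
  shows "column 1 A \<noteq> 0" "column 2 A \<noteq> 0" "column 1 A - column 2 A \<noteq> 0" "column 1 A + column 2 A \<noteq> 0"
proof -
  have d: "det A = column 1 A $ 1 * column 2 A $ 2 - column 2 A $ 1 * column 1 A $ 2"
    by (simp add: det_2 col_ent)
  show "column 1 A \<noteq> 0" using d assms by auto
  show "column 2 A \<noteq> 0" using d assms by auto
  show "column 1 A - column 2 A \<noteq> 0"
  proof
    assume "column 1 A - column 2 A = 0"
    then have "column 2 A = column 1 A" by simp
    then show False using d assms by (simp add: mult.commute)
  qed
  show "column 1 A + column 2 A \<noteq> 0"
  proof
    assume "column 1 A + column 2 A = 0"
    then have "column 2 A = - column 1 A" by (simp add: eq_neg_iff_add_eq_0 add.commute)
    then show False using d assms by (simp add: mult.commute)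
  qed
qed

lemma col_lat: "column 1 (A::real^2^2) \<in> lat A" "column 1 A - column 2 A \<in> lat A" "column 1 A + column 2 A \<in> lat A"
proof -
  have "A *v (\<chi> i. real_of_int ((\<chi> i. if i = 1 then 1 else 0) $ i)) = column 1 A"
    by (simp add: vec2_eq mv2 col_ent)
  then show "column 1 A \<in> lat A" using lat_mem by metis
  have "A *v (\<chi> i. real_of_int ((\<chi> i. if i = 1 then 1 else -1) $ i)) = column 1 A - column 2 A"
    by (simp add: vec2_eq mv2 col_ent)
  then show "column 1 A - column 2 A \<in> lat A" using lat_mem by metis
  have "A *v (\<chi> i. real_of_int ((\<chi> i. 1) $ i)) = column 1 A + column 2 A"
    by (simp add: vec2_eq mv2 col_ent)
  then show "column 1 A + column 2 A \<in> lat A" using lat_mem by metis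
qed

lemma min_basis_bound:
  assumes "min_basis L A"
  shows "min_norm L > 0" "\<bar>column 1 A \<bullet> column 2 A\<bar> \<le> min_norm L / 2"
proof -
  let ?u = "column 1 A" and ?v = "column 2 A" and ?m = "min_norm L"
  have A: "det A \<noteq> 0" "L = lat A" "(norm ?u)^2 = ?m" "(norm ?v)^2 = ?m"
    using assms unfolding min_basis_def by auto
  have "(norm ?u)^2 > 0" using det_col_nz(1)[OF A(1)] by simp
  then show "?m > 0" using A(3) by simp
  have "?m \<le> (norm (?u - ?v))^2" using min_norm_le col_lat(2) det_col_nz(3)[OF A(1)] A(2) by metis
  moreover have "?m \<le> (norm (?u + ?v))^2" using min_norm_le col_lat(3) det_col_nz(4)[OF A(1)] A(2) by metis
  moreover have "(norm (?u - ?v))^2 = 2 * ?m - 2 * (?u \<bullet> ?v)"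
    using A by (simp add: power2_norm_eq_inner inner_diff inner_commute)
  moreover have "(norm (?u + ?v))^2 = 2 * ?m + 2 * (?u \<bullet> ?v)"
    using A by (simp add: power2_norm_eq_inner inner_add inner_commute)
  ultimately show "\<bar>?u \<bullet> ?v\<bar> \<le> ?m / 2" by linarith
qed

lemma int_quad: fixes p q :: int assumes "(p, q) \<noteq> (0, 0)" shows "p^2 + q^2 - \<bar>p*q\<bar> \<ge> 1"
proof -
  have sq: "x^2 = \<bar>x\<bar> * \<bar>x\<bar>" for x :: int by (simp add: power2_eq_square abs_mult[symmetric])
  have ge1: "x \<noteq> 0 \<Longrightarrow> 1 \<le> \<bar>x\<bar>" for x :: int by arith
  show ?thesis
  proof (cases "p = 0 \<or> q = 0")
    case True
    then show ?thesis
    proof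
      assume "p = 0" then have "q \<noteq> 0" using assms by auto
      then have "1 * 1 \<le> \<bar>q\<bar> * \<bar>q\<bar>" using ge1 by (intro mult_mono) auto
      then show ?thesis using \<open>p = 0\<close> sq[of q] by simp
    next
      assume "q = 0" then have "p \<noteq> 0" using assms by auto
      then have "1 * 1 \<le> \<bar>p\<bar> * \<bar>p\<bar>" using ge1 by (intro mult_mono) auto
      then show ?thesis using \<open>q = 0\<close> sq[of p] by simp
    qed
  next
    case False
    then have "1 * 1 \<le> \<bar>p\<bar> * \<bar>q\<bar>" using ge1 by (intro mult_mono) auto
    moreover have "0 \<le> (\<bar>p\<bar> - \<bar>q\<bar>) * (\<bar>p\<bar> - \<bar>q\<bar>)" by simp
    ultimately show ?thesis unfolding sq abs_mult by (simp add: algebra_simps)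
  qed
qed

lemma WR_from_basis:
  assumes "det A \<noteq> 0" "(norm (column 1 A))^2 = \<mu>" "(norm (column 2 A))^2 = \<mu>"
    "\<bar>column 1 A \<bullet> column 2 A\<bar> \<le> \<mu> / 2"
  shows "min_norm (lat A) = \<mu>" "min_basis (lat A) A" "well_rounded (lat A)"
proof -
  let ?i = "column 1 A \<bullet> column 2 A"
  have ge: "\<mu> \<le> (norm y)^2" if yL: "y \<in> lat A" "y \<noteq> 0" for y
  proof -
    obtain z where y: "y = A *v (\<chi> i. real_of_int (z $ i))" using yL unfolding lat_def by blast
    define p where "p = z $ 1" define q where "q = z $ 2"
    have "(p, q) \<noteq> (0, 0)"
    proof
      assume "(p, q) = (0, 0)"
      then have "y = 0" unfolding y by (simp add: vec2_eq mv2 p_def q_def)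
      then show False using yL by simp
    qed
    then have pq: "real_of_int (p^2 + q^2 - \<bar>p*q\<bar>) \<ge> 1" using int_quad by (metis of_int_1_le_iff)
    have yn: "(norm y)^2 = (real_of_int p)^2 * \<mu> + (real_of_int q)^2 * \<mu> + 2 * real_of_int p * real_of_int q * ?i"
      unfolding y norm_mv using assms by (simp add: p_def q_def)
    have m0: "\<mu> \<ge> 0" using assms(2) by auto
    have "\<bar>2 * real_of_int p * real_of_int q * ?i\<bar> \<le> \<bar>real_of_int p * real_of_int q\<bar> * \<mu>"
    proof -
      have "\<bar>2 * real_of_int p * real_of_int q * ?i\<bar> = \<bar>real_of_int p * real_of_int q\<bar> * (2 * \<bar>?i\<bar>)"
        by (simp add: abs_mult)
      also have "\<dots> \<le> \<bar>real_of_int p * real_of_int q\<bar> * \<mu>"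
        using assms(4) by (intro mult_left_mono) auto
      finally show ?thesis .
    qed
    then have t0: "2 * real_of_int p * real_of_int q * ?i \<ge> - (\<bar>real_of_int p * real_of_int q\<bar> * \<mu>)"
      using abs_le_D2 by fastforce
    then have t: "2 * real_of_int p * real_of_int q * ?i \<ge> - (\<bar>real_of_int p\<bar> * \<bar>real_of_int q\<bar> * \<mu>)"
      by (simp add: abs_mult)
    have "real_of_int (p^2 + q^2 - \<bar>p*q\<bar>) = (real_of_int p)^2 + (real_of_int q)^2 - \<bar>real_of_int p\<bar> * \<bar>real_of_int q\<bar>"
      by (simp add: abs_mult)
    then have "(norm y)^2 \<ge> \<mu> * real_of_int (p^2 + q^2 - \<bar>p*q\<bar>)"
      unfolding yn using t by (simp add: algebra_simps)
    moreover have "\<mu> * real_of_int (p^2 + q^2 - \<bar>p*q\<bar>) \<ge> \<mu> * 1"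
      using pq m0 by (intro mult_left_mono) auto
    ultimately show ?thesis by simp
  qed
  show mn: "min_norm (lat A) = \<mu>"
    unfolding min_norm_def
  proof (rule cInf_eq_minimum)
    show "\<mu> \<in> {(norm y)\<^sup>2 |y. y \<in> lat A \<and> y \<noteq> 0}"
      using col_lat(1) det_col_nz(1)[OF assms(1)] assms(2) by blast
  qed (use ge in auto)
  show mb: "min_basis (lat A) A" unfolding min_basis_def using assms mn by simp
  show "well_rounded (lat A)" unfolding well_rounded_def is_lattice_def using mb assms(1) by blast
qed



lemma vec_angle_mb:
  assumes "min_basis L B"
  shows "vec_angle (column 1 B) (column 2 B) = arccos ((column 1 B \<bullet> column 2 B) / min_norm L)"
proof -
  have h: "(norm (column 1 B))^2 = min_norm L" "(norm (column 2 B))^2 = min_norm L"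
    using assms unfolding min_basis_def by auto
  have "norm (column 1 B) = sqrt (min_norm L)" "norm (column 2 B) = sqrt (min_norm L)"
    using h by (metis abs_norm_cancel real_sqrt_abs)+
  moreover have "min_norm L \<ge> 0" using h(1) by (metis zero_le_power2)
  ultimately have "norm (column 1 B) * norm (column 2 B) = min_norm L" by simp
  then show ?thesis unfolding vec_angle_def by simp
qed

lemma min_basis_neg2: "min_basis L A \<Longrightarrow> min_basis L (neg2 A)"
  unfolding min_basis_def by (simp add: neg2_lat neg2_det neg2_cols)

lemma wr_angle_eq:
  assumes "min_basis L A"
  shows "wr_angle L = arccos (\<bar>column 1 A \<bullet> column 2 A\<bar> / min_norm L)"
proof -
  let ?i = "column 1 A \<bullet> column 2 A" and ?m = "min_norm L"
  define t0 where "t0 = arccos (\<bar>?i\<bar> / ?m)"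
  have m0: "?m > 0" and ib: "\<bar>?i\<bar> \<le> ?m / 2" using min_basis_bound[OF assms] by auto
  have r0: "0 \<le> \<bar>?i\<bar> / ?m" and r1: "\<bar>?i\<bar> / ?m \<le> 1/2"
    using m0 ib by (auto simp: field_simps)
  define B where "B = (if ?i \<ge> 0 then A else neg2 A)"
  have mbB: "min_basis L B" unfolding B_def using assms min_basis_neg2 by auto
  have iB: "column 1 B \<bullet> column 2 B = \<bar>?i\<bar>" unfolding B_def by (auto simp: neg2_cols)
  have ex: "min_basis L B \<and> vec_angle (column 1 B) (column 2 B) = t0 \<and> pi/3 \<le> t0 \<and> t0 \<le> pi/2"
  proof (intro conjI)
    show "min_basis L B" by (rule mbB)
    show "vec_angle (column 1 B) (column 2 B) = t0" unfolding vec_angle_mb[OF mbB] iB t0_def ..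
    have "arccos (1/2) \<le> t0" unfolding t0_def using r0 r1 by (intro arccos_le_arccos) linarith+
    then show "pi/3 \<le> t0" by (simp add: arccos_one_half)
    have "t0 \<le> arccos 0" unfolding t0_def using r0 r1 by (intro arccos_le_arccos) linarith+
    then show "t0 \<le> pi/2" by simp
  qed
  have uniq: "t = t0" if "\<exists>C. min_basis L C \<and> vec_angle (column 1 C) (column 2 C) = t \<and> pi/3 \<le> t \<and> t \<le> pi/2" for t
  proof -
    from that obtain C where C: "min_basis L C" "vec_angle (column 1 C) (column 2 C) = t" "pi/3 \<le> t" "t \<le> pi/2"
      by blast
    let ?j = "column 1 C \<bullet> column 2 C"
    have jb: "\<bar>?j\<bar> \<le> ?m / 2" using min_basis_bound[OF C(1)] by auto
    have jr: "-1 \<le> ?j / ?m" "?j / ?m \<le> 1" using jb m0 by (auto simp: field_simps abs_le_iff)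
    have t: "t = arccos (?j / ?m)" using C(2) vec_angle_mb[OF C(1)] by simp
    have "cos t = ?j / ?m" unfolding t using jr by (simp add: cos_arccos)
    moreover have "cos t \<ge> 0" using C(3,4) pi_gt_zero by (intro cos_ge_zero) auto
    ultimately have j0: "?j \<ge> 0" using m0 by (simp add: zero_le_divide_iff)
    have dA: "det A \<noteq> 0" "L = lat A" "(norm (column 1 A))^2 = ?m" "(norm (column 2 A))^2 = ?m"
      using assms unfolding min_basis_def by auto
    have dC: "det C \<noteq> 0" "L = lat C" "(norm (column 1 C))^2 = ?m" "(norm (column 2 C))^2 = ?m"
      using C(1) unfolding min_basis_def by auto
    have "\<bar>det A\<bar> = \<bar>det C\<bar>" using lat_det_eq dA dC by metis
    then have "(det A)^2 = (det C)^2" by (metis power2_abs)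
    moreover have "(det A)^2 + ?i^2 = ?m * ?m" "(det C)^2 + ?j^2 = ?m * ?m"
      using lagrange2[of A] lagrange2[of C] dA dC by auto
    ultimately have "?j^2 = \<bar>?i\<bar>^2" by simp
    then have "sqrt (?j^2) = sqrt (\<bar>?i\<bar>^2)" by simp
    then have "?j = \<bar>?i\<bar>" using j0 by (simp only: real_sqrt_abs abs_abs)
    then show ?thesis unfolding t t0_def by simp
  qed
  have "wr_angle L = t0" unfolding wr_angle_def
  proof (rule the_equality)
    show "\<exists>A. min_basis L A \<and> vec_angle (column 1 A) (column 2 A) = t0 \<and> pi / 3 \<le> t0 \<and> t0 \<le> pi / 2"
      using ex by blast
  qed (use uniq in blast)
  then show ?thesis unfolding t0_def .
qed



lemma sim_image: "(\<lambda>x. \<alpha> *\<^sub>R (Q *v x)) ` lat G = lat ((\<alpha> *\<^sub>R Q) ** G)"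
  unfolding lat_def image_image
  by (simp add: scaleR_matrix_vector_assoc matrix_vector_mul_assoc scalar_matrix_assoc)

lemma gram_entry: "column i M \<bullet> column j M = (transpose M ** M) $ i $ j" for M :: "real^2^2"
  by (simp add: inner2 col_ent mm2 transpose_def)

lemma orth_ent: assumes "orthogonal_matrix (Q::real^2^2)"
  shows "(Q$1$1)^2 + (Q$2$1)^2 = 1" "(Q$1$2)^2 + (Q$2$2)^2 = 1" "Q$1$1 * Q$1$2 + Q$2$1 * Q$2$2 = 0"
proof -
  have "transpose Q ** Q = mat 1" using assms unfolding orthogonal_matrix_def by simp
  then have "(transpose Q ** Q) $ 1 $ 1 = 1" "(transpose Q ** Q) $ 2 $ 2 = 1" "(transpose Q ** Q) $ 1 $ 2 = 0"
    by (simp_all add: mat_def)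
  then show "(Q$1$1)^2 + (Q$2$1)^2 = 1" "(Q$1$2)^2 + (Q$2$2)^2 = 1" "Q$1$1 * Q$1$2 + Q$2$1 * Q$2$2 = 0"
    by (simp_all add: mm2 transpose_def power2_eq_square)
qed

lemma orth_inner: assumes "orthogonal_matrix (Q::real^2^2)"
  shows "(Q *v x) \<bullet> (Q *v y) = x \<bullet> y"
proof -
  have "(Q *v x) \<bullet> (Q *v y) = x$1 * y$1 * ((Q$1$1)^2 + (Q$2$1)^2) + (x$1 * y$2 + x$2 * y$1) * (Q$1$1 * Q$1$2 + Q$2$1 * Q$2$2)
     + x$2 * y$2 * ((Q$1$2)^2 + (Q$2$2)^2)"
    by (simp add: inner2 mv2 algebra_simps power2_eq_square)
  then show ?thesis using orth_ent[OF assms] by (simp add: inner2)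
qed

lemma col_mult: "column j ((\<alpha> *\<^sub>R Q) ** G) = \<alpha> *\<^sub>R (Q *v column j G)" for Q G :: "real^2^2"
  by (simp add: vec2_eq col_ent mm2 mv2 algebra_simps)

lemma sim_props:
  fixes Q G :: "real^2^2"
  assumes "orthogonal_matrix Q" "\<alpha> \<noteq> 0" "det G \<noteq> 0"
  shows "det ((\<alpha> *\<^sub>R Q) ** G) \<noteq> 0"
    "column i ((\<alpha> *\<^sub>R Q) ** G) \<bullet> column j ((\<alpha> *\<^sub>R Q) ** G) = \<alpha>^2 * (column i G \<bullet> column j G)"
proof -
  have "det (\<alpha> *\<^sub>R Q) = \<alpha>^2 * det Q" by (simp add: det_2 algebra_simps power2_eq_square)
  moreover have "det Q \<noteq> 0" using det_orthogonal_matrix[OF assms(1)] by auto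
  ultimately show "det ((\<alpha> *\<^sub>R Q) ** G) \<noteq> 0" using assms by (simp add: det_mul)
  show "column i ((\<alpha> *\<^sub>R Q) ** G) \<bullet> column j ((\<alpha> *\<^sub>R Q) ** G) = \<alpha>^2 * (column i G \<bullet> column j G)"
    unfolding col_mult using orth_inner[OF assms(1)] by (simp add: power2_eq_square)
qed

lemma sim_from_gram:
  fixes A G :: "real^2^2"
  assumes "det G \<noteq> 0" "r > 0"
    and g: "\<And>i j. column i A \<bullet> column j A = r * (column i G \<bullet> column j G)"
  shows "similar_lat (lat A) (lat G)"
proof -
  define \<alpha> where "\<alpha> = sqrt r"
  have a0: "\<alpha> > 0" unfolding \<alpha>_def using assms by simp
  have aa: "\<alpha> * \<alpha> = r" unfolding \<alpha>_def using assms by simp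
  define A' where "A' = (1/\<alpha>) *\<^sub>R A"
  have gA: "transpose A' ** A' = transpose G ** G"
  proof -
    have "(transpose A' ** A') $ i $ j = (transpose G ** G) $ i $ j" for i j
    proof -
      have "column i A' \<bullet> column j A' = (1/\<alpha>) * (1/\<alpha>) * (column i A \<bullet> column j A)"
        unfolding A'_def by (simp add: inner2 col_ent add_divide_distrib)
      also have "\<dots> = column i G \<bullet> column j G" using g[of i j] a0 aa assms(2) by (simp add: field_simps)
      finally show ?thesis unfolding gram_entry .
    qed
    then show ?thesis by (simp add: vec_eq_iff)
  qed
  obtain Gi where Gi: "G ** Gi = mat 1" "Gi ** G = mat 1"
    using assms(1) invertible_det_nz[of G] unfolding invertible_def by blast
  define Q where "Q = A' ** Gi"
  have "transpose Q ** Q = transpose Gi ** ((transpose A' ** A') ** Gi)"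
    unfolding Q_def by (simp add: matrix_transpose_mul matrix_mul_assoc)
  also have "\<dots> = transpose Gi ** ((transpose G ** G) ** Gi)" by (simp add: gA)
  also have "\<dots> = transpose (G ** Gi) ** (G ** Gi)" by (simp add: matrix_transpose_mul matrix_mul_assoc)
  also have "\<dots> = mat 1" by (simp add: Gi transpose_mat)
  finally have q1: "transpose Q ** Q = mat 1" .
  then have "orthogonal_matrix Q" unfolding orthogonal_matrix_def using matrix_left_right_inverse by blast
  moreover have "(\<alpha> *\<^sub>R Q) ** G = A"
  proof -
    have "(\<alpha> *\<^sub>R Q) ** G = \<alpha> *\<^sub>R (A' ** (Gi ** G))"
      unfolding Q_def by (simp add: scalar_matrix_assoc matrix_mul_assoc)
    also have "\<dots> = A" using a0 by (simp add: Gi A'_def)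
    finally show ?thesis .
  qed
  ultimately show ?thesis unfolding similar_lat_def using sim_image[of \<alpha> Q G] a0
    by (metis less_irrefl)
qed



lemma s3: "sqrt 3 * sqrt 3 = (3::real)" by simp

lemma Lam_ent: "Lambda_h_mat $ 1 $ 1 = 1" "Lambda_h_mat $ 1 $ 2 = -1/2"
   "Lambda_h_mat $ 2 $ 1 = 0" "Lambda_h_mat $ 2 $ 2 = sqrt 3 / 2"
  by (simp_all add: Lambda_h_mat_def)

lemma G_ent: fixes m n :: int shows
  "Gamma_mat m n $ 1 $ 1 = (real_of_int m + real_of_int n) / 2"
  "Gamma_mat m n $ 1 $ 2 = (real_of_int m - 2 * real_of_int n) / 2"
  "Gamma_mat m n $ 2 $ 1 = (real_of_int m - real_of_int n) * sqrt 3 / 2"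
  "Gamma_mat m n $ 2 $ 2 = real_of_int m * sqrt 3 / 2"
  by (simp_all add: Gamma_mat_def mm2 Lam_ent field_simps)

lemma G_props: fixes m n :: int shows
  "(norm (column 1 (Gamma_mat m n)))^2 = real_of_int (m^2 - m*n + n^2)"
  "(norm (column 2 (Gamma_mat m n)))^2 = real_of_int (m^2 - m*n + n^2)"
  "column 1 (Gamma_mat m n) \<bullet> column 2 (Gamma_mat m n) = real_of_int (2*m^2 - 2*m*n - n^2) / 2"
  "column 2 (Gamma_mat m n) \<bullet> column 1 (Gamma_mat m n) = real_of_int (2*m^2 - 2*m*n - n^2) / 2"
  "det (Gamma_mat m n) = real_of_int (n * (2*m - n)) * sqrt 3 / 2"
proof -
  have q: "(x * sqrt 3 / 2)^2 = 3 * x^2 / 4" for x :: real by (simp add: power_divide power_mult_distrib)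
  show "(norm (column 1 (Gamma_mat m n)))^2 = real_of_int (m^2 - m*n + n^2)"
    unfolding nsq2 col_ent G_ent q by (simp add: field_simps power2_eq_square)
  show "(norm (column 2 (Gamma_mat m n)))^2 = real_of_int (m^2 - m*n + n^2)"
    unfolding nsq2 col_ent G_ent q by (simp add: field_simps power2_eq_square)
  have r: "x * sqrt 3 / 2 * (y * sqrt 3 / 2) = 3 * x * y / 4" for x y :: real
    by (simp add: field_simps)
  show "column 1 (Gamma_mat m n) \<bullet> column 2 (Gamma_mat m n) = real_of_int (2*m^2 - 2*m*n - n^2) / 2"
    unfolding inner2 col_ent G_ent r by (simp add: field_simps power2_eq_square)
  then show "column 2 (Gamma_mat m n) \<bullet> column 1 (Gamma_mat m n) = real_of_int (2*m^2 - 2*m*n - n^2) / 2"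
    by (simp add: inner_commute)
  show "det (Gamma_mat m n) = real_of_int (n * (2*m - n)) * sqrt 3 / 2"
    unfolding det_2 G_ent by (simp add: field_simps power2_eq_square)
qed

lemma gram_all: fixes M :: "real^2^2"
  assumes "column 1 M \<bullet> column 1 M = r * (column 1 G \<bullet> column 1 G)"
    "column 2 M \<bullet> column 2 M = r * (column 2 G \<bullet> column 2 G)"
    "column 1 M \<bullet> column 2 M = r * (column 1 G \<bullet> column 2 G)"
  shows "column i M \<bullet> column j M = r * (column i G \<bullet> column j G)"
  using assms exhaust_2[of i] exhaust_2[of j] by (auto simp: inner_commute)

lemma G_sub: "lat (Gamma_mat m n) \<subseteq> Lambda_h"
  unfolding Gamma_mat_def Lambda_h_def
  by (rule lat_intmat) (simp add: forall_2)

lemma det_Lam: "det Lambda_h_mat = sqrt 3 / 2"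
  by (simp add: det_2 Lam_ent)



theorem lemma4p7:
  fixes a b c m n :: int and \<theta> :: real
  assumes "primitive_eisenstein_triple a b c"
    and "m > 0" and "n > 0" and "coprime m n"
    and "n \<le> m" and "m \<le> 2 * n" and "\<not> 3 dvd (m + n)"
    and "(a, b, c) = (m * (2*n - m), n * (2*m - n), m^2 - m*n + n^2) \<or>
         (b - a, b, c) = (m * (2*n - m), n * (2*m - n), m^2 - m*n + n^2)"
    and "pi/3 \<le> \<theta>" and "\<theta> \<le> pi/2"
    and "cos \<theta> = real_of_int \<bar>b - 2*a\<bar> / (2 * real_of_int c)"
  shows "lat (Gamma_mat m n) \<in> WR_h
    \<and> C_h \<theta> = {\<Omega> \<in> WR_h. similar_lat \<Omega> (lat (Gamma_mat m n))}
    \<and> min_norm (lat (Gamma_mat m n)) = real_of_int c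
    \<and> lattice_det (lat (Gamma_mat m n)) = real_of_int b * sqrt 3 / 2
    \<and> lat_index Lambda_h (lat (Gamma_mat m n)) = real_of_int b"
proof -
  define k where "k = 2*m^2 - 2*m*n - n^2"
  define G where "G = Gamma_mat m n"
  have bc: "b = n * (2*m - n)" "c = m^2 - m*n + n^2" using assms(8) by auto
  have bk: "\<bar>b - 2*a\<bar> = \<bar>k\<bar>" using assms(8) unfolding k_def
    by (auto simp: algebra_simps power2_eq_square abs_minus_commute)
  have "2*m - n > 0" using assms(3,5) by simp
  then have b0: "b > 0" using bc(1) assms(3) by simp
  have c0: "c > 0"
  proof -
    have "c = (m - n)^2 + m * n" unfolding bc by (simp add: power2_eq_square algebra_simps)
    then show ?thesis using assms(2,3) by (smt (verit) mult_pos_pos zero_le_power2)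
  qed
  have kc: "\<bar>k\<bar> \<le> c"
  proof -
    have "c - k = (2*n - m) * (m + n)" unfolding bc k_def by (simp add: power2_eq_square algebra_simps)
    moreover have "(2*n - m) * (m + n) \<ge> 0" using assms(2,3,6) by simp
    moreover have "c + k = 3 * m * (m - n)" unfolding bc k_def by (simp add: power2_eq_square algebra_simps)
    moreover have "3 * m * (m - n) \<ge> 0" using assms(2,5) by simp
    ultimately show ?thesis by linarith
  qed
  have Gn1: "(norm (column 1 G))^2 = real_of_int c" and Gn2: "(norm (column 2 G))^2 = real_of_int c"
    and Gi: "column 1 G \<bullet> column 2 G = real_of_int k / 2"
    and Gd: "det G = real_of_int b * sqrt 3 / 2"
    using G_props[of m n] unfolding G_def k_def bc by auto
  have "real_of_int b * sqrt 3 / 2 > 0" using b0 by simp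
  then have dG: "det G \<noteq> 0" using Gd by simp
  have Gib: "\<bar>column 1 G \<bullet> column 2 G\<bar> \<le> real_of_int c / 2"
    unfolding Gi using kc by simp
  note WRG = WR_from_basis[OF dG Gn1 Gn2 Gib]
  have inWR: "lat G \<in> WR_h" unfolding WR_h_def using WRG(3) G_sub G_def by auto
  have ldet: "lattice_det (lat G) = real_of_int b * sqrt 3 / 2"
    using lattice_det_lat[OF dG] Gd b0 by simp
  have ldetL: "lattice_det Lambda_h = sqrt 3 / 2"
    unfolding Lambda_h_def using lattice_det_lat[of Lambda_h_mat] det_Lam by simp
  have idx: "lat_index Lambda_h (lat G) = real_of_int b"
    unfolding lat_index_def ldet ldetL by simp
  have th: "\<theta> = arccos (\<bar>real_of_int k\<bar> / (2 * real_of_int c))"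
  proof -
    have "cos \<theta> = \<bar>real_of_int k\<bar> / (2 * real_of_int c)" using assms(11) bk
      by (metis of_int_abs)
    moreover have "0 \<le> \<theta>" "\<theta> \<le> pi" using assms(9,10) pi_gt_zero by linarith+
    ultimately show ?thesis using arccos_cos by metis
  qed
  have WRang: "wr_angle \<Omega> = \<theta> \<longleftrightarrow> similar_lat \<Omega> (lat G)" if OW: "\<Omega> \<in> WR_h" for \<Omega>
  proof -
    obtain A where A: "min_basis \<Omega> A" using OW unfolding WR_h_def well_rounded_def by auto
    let ?i = "column 1 A \<bullet> column 2 A" and ?\<mu> = "min_norm \<Omega>"
    have Ad: "det A \<noteq> 0" "\<Omega> = lat A" "(norm (column 1 A))^2 = ?\<mu>" "(norm (column 2 A))^2 = ?\<mu>"
      using A unfolding min_basis_def by auto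
    have m0: "?\<mu> > 0" and ib: "\<bar>?i\<bar> \<le> ?\<mu> / 2" using min_basis_bound[OF A] by auto
    have wa: "wr_angle \<Omega> = arccos (\<bar>?i\<bar> / ?\<mu>)" using wr_angle_eq[OF A] .
    have cpos: "real_of_int c > 0" using c0 by simp
    have kc': "\<bar>real_of_int k\<bar> \<le> real_of_int c" using kc by (metis of_int_abs of_int_le_iff)
    show ?thesis
    proof
      assume "wr_angle \<Omega> = \<theta>"
      then have "arccos (\<bar>?i\<bar> / ?\<mu>) = arccos (\<bar>real_of_int k\<bar> / (2 * real_of_int c))"
        using wa th by simp
      moreover have "\<bar>\<bar>?i\<bar> / ?\<mu>\<bar> \<le> 1"
      proof -
        have "\<bar>?i\<bar> \<le> 1 * ?\<mu>" using ib m0 by linarith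
        then have "\<bar>?i\<bar> / ?\<mu> \<le> 1" using m0 by (simp only: divide_le_eq) simp
        moreover have "0 \<le> \<bar>?i\<bar> / ?\<mu>" using m0 by simp
        ultimately show ?thesis by (metis abs_of_nonneg)
      qed
      moreover have "\<bar>\<bar>real_of_int k\<bar> / (2 * real_of_int c)\<bar> \<le> 1"
      proof -
        have "\<bar>real_of_int k\<bar> \<le> 1 * (2 * real_of_int c)" using kc' cpos by linarith
        then have "\<bar>real_of_int k\<bar> / (2 * real_of_int c) \<le> 1" using cpos by (simp only: divide_le_eq) simp
        moreover have "0 \<le> \<bar>real_of_int k\<bar> / (2 * real_of_int c)" using cpos by simp
        ultimately show ?thesis by (metis abs_of_nonneg)
      qed
      ultimately have eq: "\<bar>?i\<bar> / ?\<mu> = \<bar>real_of_int k\<bar> / (2 * real_of_int c)"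
        using arccos_eq_iff by blast
      define r where "r = ?\<mu> / real_of_int c"
      have r0: "r > 0" unfolding r_def using m0 cpos by simp
      have absi: "\<bar>?i\<bar> = r * \<bar>real_of_int k / 2\<bar>"
      proof -
        have "\<bar>?i\<bar> = ?\<mu> * (\<bar>real_of_int k\<bar> / (2 * real_of_int c))" using eq m0
          by (metis nonzero_mult_div_cancel_left less_irrefl times_divide_eq_right)
        then show ?thesis unfolding r_def by simp
      qed
      define A' where "A' = (if (?i \<ge> 0) = (k \<ge> 0) then A else neg2 A)"
      have A'l: "lat A' = \<Omega>" unfolding A'_def using Ad by (simp add: neg2_lat)
      have A'i: "column 1 A' \<bullet> column 2 A' = r * (real_of_int k / 2)"
        using absi r0 unfolding A'_def by (auto simp: neg2_cols abs_if split: if_splits)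
      have A'n: "column 1 A' \<bullet> column 1 A' = r * (column 1 G \<bullet> column 1 G)"
        "column 2 A' \<bullet> column 2 A' = r * (column 2 G \<bullet> column 2 G)"
        using Ad Gn1 Gn2 cpos unfolding A'_def r_def
        by (auto simp: neg2_cols power2_norm_eq_inner[symmetric])
      have "similar_lat (lat A') (lat G)"
        using sim_from_gram[OF dG r0 gram_all[OF A'n A'i[folded Gi]]] .
      then show "similar_lat \<Omega> (lat G)" using A'l by simp
    next
      assume "similar_lat \<Omega> (lat G)"
      then obtain \<alpha> Q where aQ: "\<alpha> \<noteq> 0" "orthogonal_matrix Q" "\<Omega> = (\<lambda>x. \<alpha> *\<^sub>R (Q *v x)) ` lat G"
        unfolding similar_lat_def by blast
      define M where "M = (\<alpha> *\<^sub>R Q) ** G"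
      have Ml: "\<Omega> = lat M" using aQ(3) sim_image unfolding M_def by simp
      note sp = sim_props[OF aQ(2) aQ(1) dG, folded M_def]
      have a2: "\<alpha>^2 > 0" using aQ(1) by simp
      have Mn1: "(norm (column 1 M))^2 = \<alpha>^2 * real_of_int c"
        using sp(2)[of 1 1] Gn1 by (simp add: power2_norm_eq_inner)
      have Mn2: "(norm (column 2 M))^2 = \<alpha>^2 * real_of_int c"
        using sp(2)[of 2 2] Gn2 by (simp add: power2_norm_eq_inner)
      have Mi: "column 1 M \<bullet> column 2 M = \<alpha>^2 * (real_of_int k / 2)" using sp(2)[of 1 2] Gi by simp
      have Mib: "\<bar>column 1 M \<bullet> column 2 M\<bar> \<le> \<alpha>^2 * real_of_int c / 2"
        unfolding Mi using kc' a2 by (simp add: abs_mult mult_left_mono)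
      have "min_basis (lat M) M" using WR_from_basis(2)[OF sp(1) Mn1 Mn2 Mib] .
      then have "wr_angle \<Omega> = arccos (\<bar>column 1 M \<bullet> column 2 M\<bar> / min_norm (lat M))"
        using wr_angle_eq Ml by simp
      also have "\<dots> = arccos (\<bar>real_of_int k\<bar> / (2 * real_of_int c))"
        unfolding WR_from_basis(1)[OF sp(1) Mn1 Mn2 Mib] Mi using a2
        by (simp add: abs_mult field_simps)
      finally show "wr_angle \<Omega> = \<theta>" using th by simp
    qed
  qed
  have Ch: "C_h \<theta> = {\<Omega> \<in> WR_h. similar_lat \<Omega> (lat G)}"
    unfolding C_h_def using WRang by auto
  show ?thesis using inWR Ch WRG(1) ldet idx unfolding G_def bc by simp
qed


end
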